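(* Let $J'=(z_w,z_w')$ be a nonempty open interval, let $r:J'\to\mathbb{R}$ be differentiable, non-increasing, with $|r(z)|<1$ on $J'$, and suppose $r$ has a unique zero $z_r\in J'$. Let $h:J'\to\mathbb{R}$ be differentiable with $\dot h(z)=1+h(z)^2-2r(z)h(z)$ on $J'$, having exactly one zero $z_*\in J'$. Let $G(z)=z-\dfrac{2h(z)}{2+h(z)^2-2r(z)h(z)}$. Then for every initial guess $z_0$ in the closed interval with endpoints $z_r$ and $z_*$ (in particular for $z_0=z_r$), the iteration $z_{n+1}=G(z_n)$ is well defined and $(z_n)$ converges monotonically to $z_*$.
   Context: $\dot{}$ denotes differentiation with respect to $z$. "Converges monotonically" means all iterates lie in $J'$, the sequence is monotone, and its limit is $z_*$. *)

theory Defs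
  imports Complex_Main
begin

definition G_map :: "(real \<Rightarrow> real) \<Rightarrow> (real \<Rightarrow> real) \<Rightarrow> real \<Rightarrow> real" where
  "G_map r h z = z - 2 * h z / (2 + (h z)^2 - 2 * r z * h z)"

end

theory Submission imports Defs begin

lemma alg:
  fixes y s :: real assumes "\<bar>s\<bar> < 1"
  shows "0 < 1 + y^2 - 2*s*y" "(4 - 2*y^2) * (1 + y^2 - 2*s*y) \<le> (2 + y^2 - 2*s*y)^2"
proof -
  have "1 + y^2 - 2*s*y = (y - s)^2 + (1 - s^2)" by (simp add: power2_eq_square algebra_simps)
  moreover have "s^2 < 1" using assms using abs_square_less_1 by blast
  ultimately show p: "0 < 1 + y^2 - 2*s*y" using zero_le_power2[of "y - s"] by linarith
  have "(2 + y^2 - 2*s*y)^2 - (4 - 2*y^2) * (1 + y^2 - 2*s*y) = (y^2 - 2*s*y)^2 + 2*y^2*(1 + y^2 - 2*s*y)"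
    by (simp add: power2_eq_square algebra_simps)
  moreover have "0 \<le> (y^2 - 2*s*y)^2 + 2*y^2*(1 + y^2 - 2*s*y)" using p by simp
  ultimately show "(4 - 2*y^2) * (1 + y^2 - 2*s*y) \<le> (2 + y^2 - 2*s*y)^2" by linarith
qed

lemma key:
  fixes h h' :: "real \<Rightarrow> real" and s a b :: real
  assumes "a \<le> b" "\<bar>s\<bar> < 1"
    and der: "\<forall>w\<in>{a..b}. (h has_real_derivative h' w) (at w)"
    and bnd: "\<forall>w\<in>{a..b}. 0 \<le> h' w \<and> h' w \<le> 1 + (h w)^2 - 2*s*h w"
  shows "a - 2*h a/(2 + (h a)^2 - 2*s*h a) \<le> b - 2*h b/(2+(h b)^2 - 2*s*h b)"
proof (rule DERIV_nonneg_imp_nondecreasing[OF assms(1)])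
  fix x assume x: "a \<le> x" "x \<le> b"
  define y where "y = h x"
  define D where "D = 2 + y^2 - 2*s*y"
  have a1: "0 < 1 + y^2 - 2*s*y" and a2: "(4 - 2*y^2) * (1 + y^2 - 2*s*y) \<le> D^2"
    using alg[OF assms(2), of y] by (auto simp: D_def)
  have Dpos: "D > 0" using a1 by (simp add: D_def)
  have hd: "(h has_real_derivative h' x) (at x)" using der x by auto
  have dd: "((\<lambda>w. 2 + (h w)^2 - 2*s*h w) has_real_derivative (2 * y * h' x - 2*s*h' x)) (at x)"
    unfolding y_def by (rule derivative_eq_intros hd refl)+ simp
  have dn: "((\<lambda>w. 2 * h w) has_real_derivative (2 * h' x)) (at x)"
    by (rule derivative_eq_intros hd refl)+ simp
  have dq: "((\<lambda>w. 2 * h w / (2 + (h w)^2 - 2*s*h w)) has_real_derivative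
        ((2 * h' x) * D - 2 * y * (2 * y * h' x - 2*s*h' x)) / D^2) (at x)"
    using DERIV_divide[OF dn dd] Dpos by (simp add: D_def y_def power2_eq_square)
  have "((\<lambda>w. w - 2*h w/(2 + (h w)^2 - 2*s*h w)) has_real_derivative
        1 - ((2 * h' x) * D - 2 * y * (2 * y * h' x - 2*s*h' x)) / D^2) (at x)"
    by (rule DERIV_diff[OF DERIV_ident dq])
  moreover have "((2 * h' x) * D - 2 * y * (2 * y * h' x - 2*s*h' x)) = (4 - 2*y^2) * h' x"
    by (simp add: D_def power2_eq_square algebra_simps)
  moreover have "(4 - 2*y^2) * h' x \<le> D^2"
  proof (cases "4 - 2*y^2 \<le> 0")
    case True
    then show ?thesis proof -
      have "(4 - 2*y^2) * h' x \<le> 0" using bnd x True mult_nonpos_nonneg[of "4 - 2*y^2" "h' x"] by auto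
      moreover have "0 \<le> D^2" by simp
      ultimately show ?thesis by linarith
    qed
  next
    case False
    then have "(4 - 2*y^2) * h' x \<le> (4 - 2*y^2) * (1 + y^2 - 2*s*y)"
      using bnd x by (intro mult_left_mono) (auto simp: y_def)
    then show ?thesis using a2 by linarith
  qed
  ultimately show "\<exists>d. ((\<lambda>w. w - 2*h w/(2 + (h w)^2 - 2*s*h w)) has_real_derivative d) (at x) \<and> 0 \<le> d"
    using Dpos by (intro exI conjI) (auto simp: field_simps)
qed


lemma iter_up:
  fixes f :: "real \<Rightarrow> real" and a b :: real
  assumes ab: "a \<le> b" and step: "\<forall>x\<in>{a..b}. x \<le> f x \<and> f x \<le> b"
    and cont: "\<forall>x\<in>{a..b}. isCont f x" and fixp: "\<forall>x\<in>{a..b}. f x = x \<longrightarrow> x = b"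
  shows "(\<forall>n. (f^^n) a \<in> {a..b}) \<and> incseq (\<lambda>n. (f^^n) a) \<and> (\<lambda>n. (f^^n) a) \<longlonglongrightarrow> b"
proof -
  define X where "X n = (f^^n) a" for n
  have XS: "X (Suc n) = f (X n)" for n by (simp add: X_def)
  have inI: "X n \<in> {a..b}" for n
  proof (induction n)
    case 0 then show ?case using ab by (simp add: X_def)
  next
    case (Suc n) then show ?case using step XS[of n] by fastforce
  qed
  have inc: "incseq X" by (rule incseq_SucI) (use step inI XS in auto)
  have ub: "\<forall>i. X i \<le> b" using inI by auto
  obtain L where L: "X \<longlonglongrightarrow> L" "\<forall>i. X i \<le> L" using incseq_convergent[OF inc ub] by blast
  have aL: "a \<le> L" using L(2) by (metis X_def funpow_0)
  have Lb: "L \<le> b" using LIMSEQ_le_const2[OF L(1)] ub by blast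
  have "(\<lambda>n. f (X n)) \<longlonglongrightarrow> f L" proof -
    have "isCont f L" using cont aL Lb by auto
    then show ?thesis using isCont_tendsto_compose[OF _ L(1)] by blast
  qed
  moreover have "(\<lambda>n. X (Suc n)) \<longlonglongrightarrow> L" using L(1) by (rule LIMSEQ_Suc)
  ultimately have "f L = L" unfolding XS using LIMSEQ_unique by blast
  then have "L = b" using fixp aL Lb by auto
  moreover have "(\<lambda>n. (f^^n) a) = X" by (simp add: X_def fun_eq_iff)
  ultimately show ?thesis using inI inc L(1) by (simp add: X_def)
qed

lemma iter_down:
  fixes f :: "real \<Rightarrow> real" and a b :: real
  assumes ab: "b \<le> a" and step: "\<forall>x\<in>{b..a}. f x \<le> x \<and> b \<le> f x"
    and cont: "\<forall>x\<in>{b..a}. isCont f x" and fixp: "\<forall>x\<in>{b..a}. f x = x \<longrightarrow> x = b"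
  shows "(\<forall>n. (f^^n) a \<in> {b..a}) \<and> decseq (\<lambda>n. (f^^n) a) \<and> (\<lambda>n. (f^^n) a) \<longlonglongrightarrow> b"
proof -
  define X where "X n = (f^^n) a" for n
  have XS: "X (Suc n) = f (X n)" for n by (simp add: X_def)
  have inI: "X n \<in> {b..a}" for n
  proof (induction n)
    case 0 then show ?case using ab by (simp add: X_def)
  next
    case (Suc n) then show ?case using step XS[of n] by fastforce
  qed
  have dec: "decseq X" by (rule decseq_SucI) (use step inI XS in auto)
  have lb: "\<forall>i. b \<le> X i" using inI by auto
  obtain L where L: "X \<longlonglongrightarrow> L" "\<forall>i. L \<le> X i" using decseq_convergent[OF dec lb] by blast
  have aL: "L \<le> a" using L(2) by (metis X_def funpow_0)
  have Lb: "b \<le> L" using LIMSEQ_le_const[OF L(1)] lb by blast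
  have "(\<lambda>n. f (X n)) \<longlonglongrightarrow> f L" proof -
    have "isCont f L" using cont aL Lb by auto
    then show ?thesis using isCont_tendsto_compose[OF _ L(1)] by blast
  qed
  moreover have "(\<lambda>n. X (Suc n)) \<longlonglongrightarrow> L" using L(1) by (rule LIMSEQ_Suc)
  ultimately have "f L = L" unfolding XS using LIMSEQ_unique by blast
  then have "L = b" using fixp aL Lb by auto
  moreover have "(\<lambda>n. (f^^n) a) = X" by (simp add: X_def fun_eq_iff)
  ultimately show ?thesis using inI dec L(1) by (simp add: X_def)
qed

theorem theorem3p5:
  fixes zw zw' zr zs :: real and r h :: "real \<Rightarrow> real"
  assumes J_ne: "zw < zw'"
    and r_diff: "\<forall>z\<in>{zw<..<zw'}. r differentiable (at z)"
    and r_noninc: "\<forall>x\<in>{zw<..<zw'}. \<forall>y\<in>{zw<..<zw'}. x \<le> y \<longrightarrow> r y \<le> r x"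
    and r_bound: "\<forall>z\<in>{zw<..<zw'}. \<bar>r z\<bar> < 1"
    and zr_in: "zr \<in> {zw<..<zw'}" and zr_zero: "r zr = 0"
    and zr_unique: "\<forall>z\<in>{zw<..<zw'}. r z = 0 \<longrightarrow> z = zr"
    and h_ode: "\<forall>z\<in>{zw<..<zw'}. (h has_real_derivative (1 + (h z)^2 - 2 * r z * h z)) (at z)"
    and zs_in: "zs \<in> {zw<..<zw'}" and zs_zero: "h zs = 0"
    and zs_unique: "\<forall>z\<in>{zw<..<zw'}. h z = 0 \<longrightarrow> z = zs"
  shows "\<forall>z0\<in>{min zr zs..max zr zs}.
           (\<forall>n. ((G_map r h ^^ n) z0) \<in> {zw<..<zw'}
                \<and> 2 + (h ((G_map r h ^^ n) z0))^2 - 2 * r ((G_map r h ^^ n) z0) * h ((G_map r h ^^ n) z0) \<noteq> 0)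
         \<and> (mono (\<lambda>n. (G_map r h ^^ n) z0) \<or> antimono (\<lambda>n. (G_map r h ^^ n) z0))
         \<and> (\<lambda>n. (G_map r h ^^ n) z0) \<longlonglongrightarrow> zs"
proof
  fix z0 assume z0: "z0 \<in> {min zr zs..max zr zs}"
  let ?J = "{zw<..<zw'}"
  define G where "G = G_map r h"
  have Geq: "G = (\<lambda>z. z - 2*h z/(2 + (h z)^2 - 2*r z*h z))" by (rule ext) (simp add: G_def G_map_def)
  have hp: "0 < 1 + (h z)^2 - 2 * r z * h z" if "z \<in> ?J" for z
    using alg(1)[of "r z" "h z"] r_bound that by auto
  have Dp: "0 < 2 + (h z)^2 - 2 * r z * h z" if "z \<in> ?J" for z using hp[OF that] by linarith
  have hmono: "h x < h y" if "x \<in> ?J" "y \<in> ?J" "x < y" for x y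
    apply (rule DERIV_pos_imp_increasing[OF that(3)])
    subgoal for t using that h_ode hp[of t] by (intro exI[of _ "1 + (h t)^2 - 2 * r t * h t"]) auto
    done
  have hneg: "h x \<le> 0" if "x \<in> ?J" "x \<le> zs" for x
    using hmono[OF that(1) zs_in] that zs_zero by (cases "x = zs") auto
  have hpos: "0 \<le> h x" if "x \<in> ?J" "zs \<le> x" for x
    using hmono[OF zs_in that(1)] that zs_zero by (cases "x = zs") auto
  have sub: "{a..b} \<subseteq> ?J" if "a \<in> ?J" "b \<in> ?J" for a b using that by auto
  have G1: "G z \<le> zs" if z: "z \<in> ?J" "z \<le> zs" for z
  proof -
    have "z - 2*h z/(2 + (h z)^2 - 2*r z*h z) \<le> zs - 2*h zs/(2+(h zs)^2 - 2*r z*h zs)"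
    proof (rule key[OF z(2), where h' = "\<lambda>w. 1 + (h w)^2 - 2 * r w * h w"])
      show "\<bar>r z\<bar> < 1" using r_bound z by auto
      show "\<forall>w\<in>{z..zs}. (h has_real_derivative 1 + (h w)^2 - 2 * r w * h w) (at w)"
        using h_ode sub[OF z(1) zs_in] by blast
      show "\<forall>w\<in>{z..zs}. 0 \<le> 1 + (h w)^2 - 2 * r w * h w \<and>
           1 + (h w)^2 - 2 * r w * h w \<le> 1 + (h w)^2 - 2 * r z * h w"
      proof
        fix w assume w: "w \<in> {z..zs}"
        then have wJ: "w \<in> ?J" using sub[OF z(1) zs_in] by blast
        have "r w \<le> r z" using r_noninc z(1) wJ w by auto
        moreover have "h w \<le> 0" using hneg wJ w by auto
        ultimately have "0 \<le> (r w - r z) * h w" by (simp add: mult_nonpos_nonpos)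
        then show "0 \<le> 1 + (h w)^2 - 2 * r w * h w \<and>
           1 + (h w)^2 - 2 * r w * h w \<le> 1 + (h w)^2 - 2 * r z * h w"
          using hp[OF wJ] by (simp add: algebra_simps)
      qed
    qed
    then show ?thesis by (simp add: Geq zs_zero)
  qed
  have G2: "zs \<le> G z" if z: "z \<in> ?J" "zs \<le> z" for z
  proof -
    have "zs - 2*h zs/(2+(h zs)^2 - 2*r z*h zs) \<le> z - 2*h z/(2 + (h z)^2 - 2*r z*h z)"
    proof (rule key[OF z(2), where h' = "\<lambda>w. 1 + (h w)^2 - 2 * r w * h w"])
      show "\<bar>r z\<bar> < 1" using r_bound z by auto
      show "\<forall>w\<in>{zs..z}. (h has_real_derivative 1 + (h w)^2 - 2 * r w * h w) (at w)"
        using h_ode sub[OF zs_in z(1)] by blast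
      show "\<forall>w\<in>{zs..z}. 0 \<le> 1 + (h w)^2 - 2 * r w * h w \<and>
           1 + (h w)^2 - 2 * r w * h w \<le> 1 + (h w)^2 - 2 * r z * h w"
      proof
        fix w assume w: "w \<in> {zs..z}"
        then have wJ: "w \<in> ?J" using sub[OF zs_in z(1)] by blast
        have "r z \<le> r w" using r_noninc z(1) wJ w by auto
        moreover have "0 \<le> h w" using hpos wJ w by auto
        ultimately have "0 \<le> (r w - r z) * h w" by simp
        then show "0 \<le> 1 + (h w)^2 - 2 * r w * h w \<and>
           1 + (h w)^2 - 2 * r w * h w \<le> 1 + (h w)^2 - 2 * r z * h w"
          using hp[OF wJ] by (simp add: algebra_simps)
      qed
    qed
    then show ?thesis by (simp add: Geq zs_zero)
  qed
  have Gup: "z \<le> G z" if z: "z \<in> ?J" "z \<le> zs" for z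
  proof -
    have "2*h z/(2 + (h z)^2 - 2*r z*h z) \<le> 0"
      using hneg[OF z] Dp[OF z(1)] by (simp add: divide_nonpos_pos)
    then show ?thesis by (simp add: Geq)
  qed
  have Gdown: "G z \<le> z" if z: "z \<in> ?J" "zs \<le> z" for z
  proof -
    have "0 \<le> 2*h z/(2 + (h z)^2 - 2*r z*h z)"
      using hpos[OF z] Dp[OF z(1)] by simp
    then show ?thesis by (simp add: Geq)
  qed
  have Gcont: "isCont G z" if z: "z \<in> ?J" for z
  proof -
    have "isCont r z" using r_diff z DERIV_isCont unfolding real_differentiable_def by blast
    moreover have "isCont h z" using h_ode z DERIV_isCont by blast
    ultimately show ?thesis unfolding Geq using Dp[OF z]
      by (intro continuous_intros) auto
  qed
  have Gfix: "z = zs" if z: "z \<in> ?J" "G z = z" for z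
  proof -
    have "2*h z/(2 + (h z)^2 - 2*r z*h z) = 0" using z(2) by (simp add: Geq)
    then have "h z = 0" using Dp[OF z(1)] by simp
    then show ?thesis using zs_unique z by auto
  qed
  have z0J: "z0 \<in> ?J" using z0 zr_in zs_in by auto
  have res: "(\<forall>n. (G ^^ n) z0 \<in> ?J) \<and> (mono (\<lambda>n. (G ^^ n) z0) \<or> antimono (\<lambda>n. (G ^^ n) z0))
         \<and> (\<lambda>n. (G ^^ n) z0) \<longlonglongrightarrow> zs"
  proof (cases "z0 \<le> zs")
    case True
    have S: "{z0..zs} \<subseteq> ?J" using sub[OF z0J zs_in] .
    have "(\<forall>n. (G^^n) z0 \<in> {z0..zs}) \<and> incseq (\<lambda>n. (G^^n) z0) \<and> (\<lambda>n. (G^^n) z0) \<longlonglongrightarrow> zs"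
      apply (rule iter_up[OF True])
      using S Gup G1 Gcont Gfix by auto
    then show ?thesis using S by blast
  next
    case False
    have S: "{zs..z0} \<subseteq> ?J" using sub[OF zs_in z0J] .
    have "(\<forall>n. (G^^n) z0 \<in> {zs..z0}) \<and> decseq (\<lambda>n. (G^^n) z0) \<and> (\<lambda>n. (G^^n) z0) \<longlonglongrightarrow> zs"
      apply (rule iter_down)
      using False S Gdown G2 Gcont Gfix by auto
    then show ?thesis using S by blast
  qed
  then show "(\<forall>n. ((G_map r h ^^ n) z0) \<in> {zw<..<zw'}
                \<and> 2 + (h ((G_map r h ^^ n) z0))^2 - 2 * r ((G_map r h ^^ n) z0) * h ((G_map r h ^^ n) z0) \<noteq> 0)
         \<and> (mono (\<lambda>n. (G_map r h ^^ n) z0) \<or> antimono (\<lambda>n. (G_map r h ^^ n) z0))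
         \<and> (\<lambda>n. (G_map r h ^^ n) z0) \<longlonglongrightarrow> zs"
    using Dp unfolding G_def by (metis less_irrefl)
qed

end
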